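(* Let $M=(S,\mathrm{Act},P)$ be an MDP, $T\subseteq S$, $\mathrm{opt}\in\{\min,\max\}$, and let $r\in\mathbb{N}_\infty^S$ satisfy $D^{\overline{\mathrm{opt}}}(r)\le r$ (pointwise). Then for all $s\in S$: if $r(s)<\infty$ then $\Pr^{\mathrm{opt}}_s(\Diamond T)>0$.
   Context: An MDP is a tuple $M=(S,\mathrm{Act},P)$ with $S$ finite, $\mathrm{Act}$ finite, $P\colon S\times\mathrm{Act}\times S\to[0,1]$ with $\sum_{s'}P(s,a,s')\in\{0,1\}$; $\mathrm{Act}(s)=\{a\mid\sum_{s'}P(s,a,s')=1\}$ is nonempty for all $s$; $\mathrm{Post}(s,a)=\{s'\mid P(s,a,s')>0\}$. A strategy is $\sigma\colon S\to\mathrm{Act}$ with $\sigma(s)\in\mathrm{Act}(s)$, inducing a Markov chain with transitions $P(s,\sigma(s),\cdot)$; $\Pr^\sigma_s(\Diamond T)$ is the probability of visiting $T$ from $s$, and $\Pr^{\mathrm{opt}}_s(\Diamond T)=\mathrm{opt}_\sigma\Pr^\sigma_s(\Diamond T)$. $\overline{\min}=\max$, $\overline{\max}=\min$. $\mathbb{N}_\infty=\mathbb{N}\cup\{\infty\}$ with $1+\infty=\infty$. For $\mathrm{opt}'\in\{\min,\max\}$ the distance operator $D^{\mathrm{opt}'}\colon\mathbb{N}_\infty^S\to\mathbb{N}_\infty^S$ is $D^{\mathrm{opt}'}(r)(s)=0$ for $s\in T$ and $1+\mathrm{opt}'_{a\in\mathrm{Act}(s)}\min_{s'\in\mathrm{Post}(s,a)}r(s')$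 for $s\notin T$. *)

theory Defs
  imports "HOL-Analysis.Analysis" "HOL-Library.Extended_Nat"
begin

definition is_mdp :: "('s::finite \<Rightarrow> 'act::finite \<Rightarrow> 's \<Rightarrow> real) \<Rightarrow> bool" where
  "is_mdp P \<longleftrightarrow>
     (\<forall>s a s'. 0 \<le> P s a s' \<and> P s a s' \<le> 1) \<and>
     (\<forall>s a. (\<Sum>s'\<in>UNIV. P s a s') \<in> {0, 1}) \<and>
     (\<forall>s. \<exists>a. (\<Sum>s'\<in>UNIV. P s a s') = 1)"

definition Act :: "('s::finite \<Rightarrow> 'act::finite \<Rightarrow> 's \<Rightarrow> real) \<Rightarrow> 's \<Rightarrow> 'act set" where
  "Act P s = {a. (\<Sum>s'\<in>UNIV. P s a s') = 1}"

definition Post :: "('s \<Rightarrow> 'act \<Rightarrow> 's \<Rightarrow> real) \<Rightarrow> 's \<Rightarrow> 'act \<Rightarrow> 's set" where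
  "Post P s a = {s'. P s a s' > 0}"

text \<open>Memoryless deterministic strategies.\<close>
definition strategies :: "('s::finite \<Rightarrow> 'act::finite \<Rightarrow> 's \<Rightarrow> real) \<Rightarrow> ('s \<Rightarrow> 'act) set" where
  "strategies P = {\<sigma>. \<forall>s. \<sigma> s \<in> Act P s}"

fun reach_within :: "('s::finite \<Rightarrow> 'act \<Rightarrow> 's \<Rightarrow> real) \<Rightarrow> ('s \<Rightarrow> 'act) \<Rightarrow> 's set \<Rightarrow> nat \<Rightarrow> 's \<Rightarrow> real" where
  "reach_within P \<sigma> T 0 s = (if s \<in> T then 1 else 0)"
| "reach_within P \<sigma> T (Suc n) s =
     (if s \<in> T then 1 else (\<Sum>s'\<in>UNIV. P s (\<sigma> s) s' * reach_within P \<sigma> T n s'))"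

text \<open>Pr^\<sigma>_s(\<Diamond>T): the probability of eventually visiting T, i.e. the supremum
  (= limit, by continuity of measure) of the probabilities of visiting T within n steps.\<close>
definition reach_prob :: "('s::finite \<Rightarrow> 'act \<Rightarrow> 's \<Rightarrow> real) \<Rightarrow> ('s \<Rightarrow> 'act) \<Rightarrow> 's set \<Rightarrow> 's \<Rightarrow> real" where
  "reach_prob P \<sigma> T s = (SUP n. reach_within P \<sigma> T n s)"

datatype optimum = OMin | OMax

fun dual :: "optimum \<Rightarrow> optimum" where
  "dual OMin = OMax" | "dual OMax = OMin"

fun opt_of :: "optimum \<Rightarrow> 'b::linorder set \<Rightarrow> 'b" where
  "opt_of OMin A = Min A" | "opt_of OMax A = Max A"

definition opt_reach_prob :: "optimum \<Rightarrow> ('s::finite \<Rightarrow> 'act::finite \<Rightarrow> 's \<Rightarrow> real) \<Rightarrow> 's set \<Rightarrow> 's \<Rightarrow> real" where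
  "opt_reach_prob opt P T s = opt_of opt ((\<lambda>\<sigma>. reach_prob P \<sigma> T s) ` strategies P)"

definition dist_op :: "optimum \<Rightarrow> ('s::finite \<Rightarrow> 'act::finite \<Rightarrow> 's \<Rightarrow> real) \<Rightarrow> 's set \<Rightarrow> ('s \<Rightarrow> enat) \<Rightarrow> 's \<Rightarrow> enat" where
  "dist_op opt' P T r s =
     (if s \<in> T then 0
      else 1 + opt_of opt' ((\<lambda>a. Min (r ` Post P s a)) ` Act P s))"

end

theory Submission
  imports Defs
begin

lemma rw_nonneg:
  assumes "is_mdp P"
  shows "reach_within P \<sigma> T n s \<ge> 0"
proof (induction n arbitrary: s)
  case 0 then show ?case by simp
next
  case (Suc n)
  have "\<And>s'. 0 \<le> P s (\<sigma> s) s'" using assms unfolding is_mdp_def by blast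
  then show ?case using Suc by (simp add: sum_nonneg)
qed

lemma rw_le1:
  assumes "is_mdp P" "\<sigma> \<in> strategies P"
  shows "reach_within P \<sigma> T n s \<le> 1"
proof (induction n arbitrary: s)
  case 0 then show ?case by simp
next
  case (Suc n)
  have nn: "\<And>s'. 0 \<le> P s (\<sigma> s) s'" using assms unfolding is_mdp_def by blast
  have "(\<Sum>s'\<in>UNIV. P s (\<sigma> s) s' * reach_within P \<sigma> T n s') \<le> (\<Sum>s'\<in>UNIV. P s (\<sigma> s) s')"
    by (rule sum_mono) (simp add: Suc mult_left_le nn)
  also have "\<dots> = 1" using assms(2) unfolding strategies_def Act_def by blast
  finally show ?case by simp
qed

lemma post_ne:
  assumes "is_mdp P" "a \<in> Act P s"
  shows "Post P s a \<noteq> {}"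
proof
  assume e: "Post P s a = {}"
  have "\<And>s'. P s a s' = 0" using e assms(1) unfolding Post_def is_mdp_def
    by (metis empty_iff less_eq_real_def mem_Collect_eq)
  then have "(\<Sum>s'\<in>UNIV. P s a s') = 0" by simp
  then show False using assms(2) unfolding Act_def by simp
qed

lemma key:
  fixes r :: "'s::finite \<Rightarrow> enat"
  assumes mdp: "is_mdp P" and st: "\<sigma> \<in> strategies P"
    and H: "\<And>s. s \<notin> T \<Longrightarrow> 1 + Min (r ` Post P s (\<sigma> s)) \<le> r s"
  shows "r s \<le> enat k \<Longrightarrow> reach_within P \<sigma> T k s > 0"
proof (induction k arbitrary: s)
  case 0
  show ?case
  proof (cases "s \<in> T")
    case True then show ?thesis by simp
  next
    case False
    have "1 + Min (r ` Post P s (\<sigma> s)) \<le> 0" using H[OF False] 0 by (simp add: zero_enat_def)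
    then show ?thesis by (simp add: plus_1_eSuc)
  qed
next
  case (Suc j)
  show ?case
  proof (cases "s \<in> T")
    case True then show ?thesis by simp
  next
    case False
    have ne: "Post P s (\<sigma> s) \<noteq> {}" using post_ne[OF mdp] st unfolding strategies_def by blast
    define m where "m = Min (r ` Post P s (\<sigma> s))"
    have "m \<in> r ` Post P s (\<sigma> s)" unfolding m_def using ne by (intro Min_in) auto
    then obtain s' where s': "s' \<in> Post P s (\<sigma> s)" "r s' = m" by blast
    have "1 + m \<le> enat (Suc j)" using H[OF False] Suc.prems unfolding m_def by (meson order_trans)
    then have "m \<le> enat j" by (cases m) (auto simp: one_enat_def)
    then have pos: "reach_within P \<sigma> T j s' > 0" using Suc.IH s' by simp
    have pp: "P s (\<sigma> s) s' > 0" using s' unfolding Post_def by simp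
    have nn: "\<And>x. 0 \<le> P s (\<sigma> s) x * reach_within P \<sigma> T j x"
      using mdp rw_nonneg[OF mdp] unfolding is_mdp_def by (simp add: mult_nonneg_nonneg)
    have "0 < P s (\<sigma> s) s' * reach_within P \<sigma> T j s'" using pos pp by simp
    also have "\<dots> \<le> (\<Sum>x\<in>UNIV. P s (\<sigma> s) x * reach_within P \<sigma> T j x)"
      by (rule member_le_sum) (auto simp: nn)
    finally show ?thesis using False by simp
  qed
qed

lemma rp_pos:
  fixes r :: "'s::finite \<Rightarrow> enat"
  assumes mdp: "is_mdp P" and st: "\<sigma> \<in> strategies P"
    and H: "\<And>s. s \<notin> T \<Longrightarrow> 1 + Min (r ` Post P s (\<sigma> s)) \<le> r s"
    and fin: "r s < \<infinity>"
  shows "reach_prob P \<sigma> T s > 0"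
proof -
  obtain k where k: "r s = enat k" using fin by (cases "r s") auto
  have "reach_within P \<sigma> T k s > 0" using key[OF mdp st H, where s=s and k=k] k by simp
  also have "reach_within P \<sigma> T k s \<le> reach_prob P \<sigma> T s" unfolding reach_prob_def
    by (rule cSUP_upper) (auto intro!: bdd_aboveI[where M=1] rw_le1[OF mdp st])
  finally show ?thesis .
qed

lemma strat_fin: "finite (strategies P)"
  by simp

theorem proposition1:
  fixes P :: "'s::finite \<Rightarrow> 'act::finite \<Rightarrow> 's \<Rightarrow> real"
    and T :: "'s set" and opt :: optimum and r :: "'s \<Rightarrow> enat"
  assumes "is_mdp P"
    and "\<forall>s. dist_op (dual opt) P T r s \<le> r s"
  shows "\<forall>s. r s < \<infinity> \<longrightarrow> opt_reach_prob opt P T s > 0"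
proof (intro allI impI)
  fix s assume fin: "r s < \<infinity>"
  have actne: "\<And>s. Act P s \<noteq> {}" using assms(1) unfolding is_mdp_def Act_def by blast
  obtain \<sigma>0 where \<sigma>0: "\<sigma>0 \<in> strategies P"
    proof -
    have "\<forall>s. \<exists>a. a \<in> Act P s" using actne by blast
    then obtain f where "\<forall>s. f s \<in> Act P s" by metis
    then show ?thesis using that unfolding strategies_def by blast
  qed
  have sne: "strategies P \<noteq> {}" using \<sigma>0 by blast
  show "opt_reach_prob opt P T s > 0"
  proof (cases opt)
    case OMin
    have "\<forall>x \<in> (\<lambda>\<sigma>. reach_prob P \<sigma> T s) ` strategies P. x > 0"
    proof
      fix x assume "x \<in> (\<lambda>\<sigma>. reach_prob P \<sigma> T s) ` strategies P"
      then obtain \<sigma> where \<sigma>: "\<sigma> \<in> strategies P" "x = reach_prob P \<sigma> T s" by blast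
      have H: "1 + Min (r ` Post P t (\<sigma> t)) \<le> r t" if "t \<notin> T" for t
      proof -
        have a: "\<sigma> t \<in> Act P t" using \<sigma> unfolding strategies_def by blast
        have "Min (r ` Post P t (\<sigma> t)) \<le> Max ((\<lambda>a. Min (r ` Post P t a)) ` Act P t)"
          using a by (intro Max_ge) auto
        then have "1 + Min (r ` Post P t (\<sigma> t)) \<le> 1 + Max ((\<lambda>a. Min (r ` Post P t a)) ` Act P t)"
          by (simp add: add_left_mono)
        also have "\<dots> \<le> r t" using assms(2) that OMin unfolding dist_op_def by (metis dual.simps(1) opt_of.simps(2))
        finally show ?thesis .
      qed
      show "x > 0" using rp_pos[OF assms(1) \<sigma>(1) H fin] \<sigma>(2) by simp
    qed
    then show ?thesis using OMin sne unfolding opt_reach_prob_def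
      by (simp add: Min_gr_iff)
  next
    case OMax
    define \<sigma> where "\<sigma> = (\<lambda>t. SOME a. a \<in> Act P t \<and> (t \<notin> T \<longrightarrow> 1 + Min (r ` Post P t a) \<le> r t))"
    have ex: "\<exists>a. a \<in> Act P t \<and> (t \<notin> T \<longrightarrow> 1 + Min (r ` Post P t a) \<le> r t)" for t
    proof (cases "t \<in> T")
      case True then show ?thesis using actne by blast
    next
      case False
      have "Min ((\<lambda>a. Min (r ` Post P t a)) ` Act P t) \<in> (\<lambda>a. Min (r ` Post P t a)) ` Act P t"
        using actne by (intro Min_in) auto
      then obtain a where a: "a \<in> Act P t" "Min (r ` Post P t a) = Min ((\<lambda>a. Min (r ` Post P t a)) ` Act P t)"
        by auto
      have "1 + Min (r ` Post P t a) \<le> r t" using assms(2) False OMax a(2) unfolding dist_op_def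
        by (metis dual.simps(2) opt_of.simps(1))
      then show ?thesis using a(1) by blast
    qed
    have sp: "\<sigma> t \<in> Act P t \<and> (t \<notin> T \<longrightarrow> 1 + Min (r ` Post P t (\<sigma> t)) \<le> r t)" for t
      unfolding \<sigma>_def using someI_ex[OF ex[of t]] .
    have st: "\<sigma> \<in> strategies P" using sp unfolding strategies_def by blast
    have pos: "reach_prob P \<sigma> T s > 0" by (rule rp_pos[where r=r, OF assms(1) st]) (use sp fin in auto)
    have "reach_prob P \<sigma> T s \<le> Max ((\<lambda>\<sigma>. reach_prob P \<sigma> T s) ` strategies P)"
      using st by (intro Max_ge) auto
    then show ?thesis using OMax pos unfolding opt_reach_prob_def by simp
  qed
qed

end
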